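(* Let $X$ be a manifold of dimension $n > 1$, equipped with a metric, and let $\Phi : \mathbb{R} \times X \to X$ be a $C^r$ flow with $r > 0$ which is quasi-minimal. Suppose the vector field generating $\Phi$ is bounded. Then there is a set $E \subset \mathbb{R}$ of first category (meagre) such that for every $t \in \mathbb{R} \setminus E$, the diffeomorphism $f = \Phi_t : X \to X$ is quasi-minimal (as a $\mathbb{Z}$-action), and the exceptional set of $f$ coincides with the exceptional set of the flow $\Phi$.
   Context: A dynamical system $\Phi : G \times X \to X$ of a topological group $G$ on a metric space $X$ is called quasi-minimal if the union of its dense orbits is open (an orbit of $x$ is $\Phi(G \times \{x\})$). The exceptional set of $\Phi$ is the union of its non-dense orbits. For a homeomorphism $f$, this is applied to the $\mathbb{Z}$-action $(n,x) \mapsto f^n(x)$. $\Phi_t$ denotes the time-$t$ map $x \mapsto \Phi(t,x)$. *)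

theory Defs
  imports "HOL-Analysis.Analysis"
begin

definition nowhere_dense :: "'a::topological_space set \<Rightarrow> bool" where
  "nowhere_dense S \<longleftrightarrow> interior (closure S) = {}"

definition meagre :: "'a::topological_space set \<Rightarrow> bool" where
  "meagre E \<longleftrightarrow> (\<exists>F :: nat \<Rightarrow> 'a set. (\<forall>i. nowhere_dense (F i)) \<and> E \<subseteq> (\<Union>i. F i))"

fun iter_deriv :: "'a::real_normed_vector list \<Rightarrow> ('a \<Rightarrow> 'b::real_normed_vector) \<Rightarrow> 'a \<Rightarrow> 'b" where
  "iter_deriv [] f = f"
| "iter_deriv (v # vs) f = (\<lambda>x. frechet_derivative (iter_deriv vs f) (at x) v)"

definition Cr_on :: "nat \<Rightarrow> 'a::real_normed_vector set \<Rightarrow> ('a \<Rightarrow> 'b::real_normed_vector) \<Rightarrow> bool" where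
  "Cr_on r S f \<longleftrightarrow>
     (\<forall>vs. length vs < r \<longrightarrow> (\<forall>x\<in>S. iter_deriv vs f differentiable (at x))) \<and>
     (\<forall>vs. length vs \<le> r \<longrightarrow> continuous_on S (iter_deriv vs f))"

definition is_chart :: "('a::topological_space set \<times> ('a \<Rightarrow> real^'n)) \<Rightarrow> bool" where
  "is_chart c \<longleftrightarrow> (case c of (U, \<phi>) \<Rightarrow>
     open U \<and> open (\<phi> ` U) \<and> inj_on \<phi> U \<and> continuous_on U \<phi> \<and>
     continuous_on (\<phi> ` U) (inv_into U \<phi>))"

definition Cr_atlas :: "nat \<Rightarrow> ('a::topological_space set \<times> ('a \<Rightarrow> real^'n)) set \<Rightarrow> bool" where
  "Cr_atlas r A \<longleftrightarrow>
     (\<Union>(fst ` A) = UNIV) \<and> (\<forall>c\<in>A. is_chart c) \<and>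
     (\<forall>(U, \<phi>)\<in>A. \<forall>(V, \<psi>)\<in>A. Cr_on r (\<phi> ` (U \<inter> V)) (\<psi> \<circ> inv_into U \<phi>))"

definition is_flow :: "(real \<Rightarrow> 'a::topological_space \<Rightarrow> 'a) \<Rightarrow> bool" where
  "is_flow \<Phi> \<longleftrightarrow> (\<forall>x. \<Phi> 0 x = x) \<and> (\<forall>s t x. \<Phi> (s + t) x = \<Phi> s (\<Phi> t x)) \<and>
     continuous_on UNIV (\<lambda>p. \<Phi> (fst p) (snd p))"

definition Cr_flow :: "nat \<Rightarrow> ('a::topological_space set \<times> ('a \<Rightarrow> real^'n)) set \<Rightarrow>
    (real \<Rightarrow> 'a \<Rightarrow> 'a) \<Rightarrow> bool" where
  "Cr_flow r A \<Phi> \<longleftrightarrow> is_flow \<Phi> \<and>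
     (\<forall>(U, \<phi>)\<in>A. \<forall>(V, \<psi>)\<in>A.
        Cr_on r {(t, y). y \<in> \<phi> ` U \<and> \<Phi> t (inv_into U \<phi> y) \<in> V}
              (\<lambda>(t, y). \<psi> (\<Phi> t (inv_into U \<phi> y))))"

text \<open>Boundedness of the generating vector field, expressed metrically: the speed of
  every orbit is bounded by a uniform constant C.\<close>
definition bounded_generator :: "(real \<Rightarrow> 'a::metric_space \<Rightarrow> 'a) \<Rightarrow> bool" where
  "bounded_generator \<Phi> \<longleftrightarrow> (\<exists>C. \<forall>t x. dist (\<Phi> t x) x \<le> C * \<bar>t\<bar>)"

definition flow_orbit :: "(real \<Rightarrow> 'a \<Rightarrow> 'a) \<Rightarrow> 'a \<Rightarrow> 'a set" where
  "flow_orbit \<Phi> x = (\<lambda>t. \<Phi> t x) ` UNIV"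

definition zpow :: "('a \<Rightarrow> 'a) \<Rightarrow> int \<Rightarrow> 'a \<Rightarrow> 'a" where
  "zpow f n = (if 0 \<le> n then f ^^ nat n else inv f ^^ nat (- n))"

definition z_orbit :: "('a \<Rightarrow> 'a) \<Rightarrow> 'a \<Rightarrow> 'a set" where
  "z_orbit f x = (\<lambda>n. zpow f n x) ` UNIV"

definition dense_set :: "'a::topological_space set \<Rightarrow> bool" where
  "dense_set S \<longleftrightarrow> closure S = UNIV"

definition flow_quasi_minimal :: "(real \<Rightarrow> 'a::topological_space \<Rightarrow> 'a) \<Rightarrow> bool" where
  "flow_quasi_minimal \<Phi> \<longleftrightarrow> open (\<Union>{flow_orbit \<Phi> x | x. dense_set (flow_orbit \<Phi> x)})"

definition flow_exceptional_set :: "(real \<Rightarrow> 'a::topological_space \<Rightarrow> 'a) \<Rightarrow> 'a set" where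
  "flow_exceptional_set \<Phi> = \<Union>{flow_orbit \<Phi> x | x. \<not> dense_set (flow_orbit \<Phi> x)}"

definition homeo_quasi_minimal :: "('a::topological_space \<Rightarrow> 'a) \<Rightarrow> bool" where
  "homeo_quasi_minimal f \<longleftrightarrow> open (\<Union>{z_orbit f x | x. dense_set (z_orbit f x)})"

definition homeo_exceptional_set :: "('a::topological_space \<Rightarrow> 'a) \<Rightarrow> 'a set" where
  "homeo_exceptional_set f = \<Union>{z_orbit f x | x. \<not> dense_set (z_orbit f x)}"

end

theory Submission
  imports Defs "HOL-Homology.Invariance_of_Domain"
begin


definition Gs :: "real set \<Rightarrow> real \<Rightarrow> real set" where
 "Gs S \<delta> = {t. \<exists>F. finite F \<and> F \<subseteq> S \<and> (\<forall>u. \<exists>r\<in>F. \<exists>m::int. \<bar>u + of_int m * t - r\<bar> < \<delta>)}"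

lemma lemA:
  fixes \<alpha> \<beta> \<epsilon> p :: real
  assumes "0<\<alpha>" "\<alpha><\<beta>" "\<epsilon>>0" "\<forall>R. \<exists>r\<in>S. \<bar>r\<bar> > R"
  shows "\<exists>r\<in>S. \<exists>k::int. \<exists>\<alpha>' \<beta>'. \<alpha> \<le> \<alpha>' \<and> \<alpha>' < \<beta>' \<and> \<beta>' \<le> \<beta> \<and>
           (\<forall>t. \<alpha>' \<le> t \<and> t \<le> \<beta>' \<longrightarrow> \<bar>r - of_int k * t - p\<bar> < \<epsilon>)"
proof -
  obtain r where rS: "r\<in>S" and rbig: "\<bar>r\<bar> > \<bar>p\<bar> + 2*\<alpha>*\<beta>/(\<beta>-\<alpha>) + 1"
    using assms(4) by blast
  define q where "q = \<bar>r - p\<bar>"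
  have qbig: "q > 2*\<alpha>*\<beta>/(\<beta>-\<alpha>)" using rbig unfolding q_def by linarith
  have pos: "2*\<alpha>*\<beta>/(\<beta>-\<alpha>) > 0" using assms by simp
  have qpos: "q > 0" using qbig pos by linarith
  have "q*(\<beta>-\<alpha>) > 2*\<alpha>*\<beta>" using qbig assms by (simp add: pos_divide_less_eq)
  moreover have "\<alpha>*\<beta> > 0" using assms by simp
  ultimately have "q*(\<beta>-\<alpha>) > \<alpha>*\<beta>" by linarith
  hence key: "q/\<beta> + 1 < q/\<alpha>" using assms by (simp add: field_simps)
  define n where "n = ceiling (q/\<beta>)"
  have n1: "real_of_int n \<ge> q/\<beta>" unfolding n_def by simp
  have n2: "real_of_int n < q/\<beta> + 1" unfolding n_def by linarith
  have "q/\<beta> > 0" using qpos assms by simp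
  then have npos: "real_of_int n > 0" using n1 by linarith
  define t0 where "t0 = q / real_of_int n"
  have "real_of_int n * \<beta> \<ge> q" using n1 assms by (simp add: divide_le_eq)
  hence t0b: "t0 \<le> \<beta>" unfolding t0_def using npos by (simp add: divide_le_eq mult.commute)
  have "real_of_int n < q/\<alpha>" using n2 key by linarith
  hence "real_of_int n * \<alpha> < q" using assms by (simp add: less_divide_eq)
  hence t0a: "t0 > \<alpha>" unfolding t0_def using npos by (simp add: less_divide_eq mult.commute)
  define \<alpha>' where "\<alpha>' = max \<alpha> (t0 - \<epsilon>/(2*real_of_int n))"
  have a1: "\<alpha> \<le> \<alpha>'" unfolding \<alpha>'_def by simp
  have a2: "\<alpha>' < t0" unfolding \<alpha>'_def using t0a npos assms(3) by simp
  define k where "k = (if r \<ge> p then n else - n)"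
  have main: "\<bar>r - of_int k * t - p\<bar> < \<epsilon>" if "\<alpha>' \<le> t" "t \<le> t0" for t
  proof -
    have "t0 - t \<le> \<epsilon>/(2*real_of_int n)" using that unfolding \<alpha>'_def by simp
    hence "real_of_int n * (t0 - t) \<le> real_of_int n * (\<epsilon>/(2*real_of_int n))"
      using npos by (intro mult_left_mono) auto
    also have "\<dots> = \<epsilon>/2" using npos by simp
    finally have h1: "real_of_int n * (t0 - t) \<le> \<epsilon>/2" .
    have h2: "real_of_int n * (t0 - t) \<ge> 0" using npos that by simp
    have h3: "real_of_int n * t0 = q" unfolding t0_def using npos by simp
    have "\<bar>r - of_int k * t - p\<bar> = \<bar>q - real_of_int n * t\<bar>"
      unfolding k_def q_def by (cases "r \<ge> p") (auto simp: abs_if algebra_simps)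
    also have "\<dots> = real_of_int n * (t0 - t)" using h2 h3 by (simp add: algebra_simps)
    finally show ?thesis using h1 assms(3) by linarith
  qed
  show ?thesis using rS a1 a2 t0b main by blast
qed

lemma lemB:
  fixes \<alpha> \<beta> \<delta> :: real
  assumes "0<\<alpha>" "\<alpha><\<beta>" "\<delta>>0" "\<forall>R. \<exists>r\<in>S. \<bar>r\<bar> > R"
  shows "\<exists>\<alpha>' \<beta>' F. \<alpha> \<le> \<alpha>' \<and> \<alpha>' < \<beta>' \<and> \<beta>' \<le> \<beta> \<and> finite F \<and> F \<subseteq> S \<and>
     (\<forall>i<K. \<forall>t. \<alpha>' \<le> t \<and> t \<le> \<beta>' \<longrightarrow> (\<exists>r\<in>F. \<exists>k::int. \<bar>r - of_int k * t - real i * \<delta>/2\<bar> < \<delta>/2))"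
proof (induction K)
  case 0
  show ?case
    by (rule exI[of _ \<alpha>], rule exI[of _ \<beta>], rule exI[of _ "{}"]) (use assms in simp)
next
  case (Suc K)
  then obtain \<alpha>1 \<beta>1 F where H: "\<alpha> \<le> \<alpha>1" "\<alpha>1 < \<beta>1" "\<beta>1 \<le> \<beta>" "finite F" "F \<subseteq> S"
     "\<forall>i<K. \<forall>t. \<alpha>1 \<le> t \<and> t \<le> \<beta>1 \<longrightarrow> (\<exists>r\<in>F. \<exists>k::int. \<bar>r - of_int k * t - real i * \<delta>/2\<bar> < \<delta>/2)"
    by blast
  have a1: "0 < \<alpha>1" using H(1) assms(1) by linarith
  have d2: "\<delta>/2 > 0" using assms(3) by simp
  obtain r k \<alpha>' \<beta>' where R: "r\<in>S" "\<alpha>1 \<le> \<alpha>'" "\<alpha>' < \<beta>'" "\<beta>' \<le> \<beta>1"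
    "\<forall>t. \<alpha>' \<le> t \<and> t \<le> \<beta>' \<longrightarrow> \<bar>r - of_int k * t - real K * \<delta>/2\<bar> < \<delta>/2"
    using lemA[OF a1 H(2) d2 assms(4), of "real K * \<delta>/2"] by blast
  have cov: "\<forall>i<Suc K. \<forall>t. \<alpha>' \<le> t \<and> t \<le> \<beta>' \<longrightarrow>
      (\<exists>r'\<in>insert r F. \<exists>k::int. \<bar>r' - of_int k * t - real i * \<delta>/2\<bar> < \<delta>/2)"
  proof (intro allI impI)
    fix i t assume i: "i < Suc K" and t: "\<alpha>' \<le> t \<and> t \<le> \<beta>'"
    show "\<exists>r'\<in>insert r F. \<exists>k::int. \<bar>r' - of_int k * t - real i * \<delta>/2\<bar> < \<delta>/2"
    proof (cases "i = K")
      case True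
      then have "\<bar>r - of_int k * t - real i * \<delta>/2\<bar> < \<delta>/2" using R(5) t by simp
      then show ?thesis by blast
    next
      case False
      then have iK: "i < K" using i by simp
      have t1: "\<alpha>1 \<le> t \<and> t \<le> \<beta>1" using t R(2,4) by linarith
      obtain r' k' where "r' \<in> F" "\<bar>r' - of_int k' * t - real i * \<delta>/2\<bar> < \<delta>/2"
        using H(6) iK t1 by blast
      then show ?thesis by blast
    qed
  qed
  have fin: "finite (insert r F)" using H(4) by simp
  have sub: "insert r F \<subseteq> S" using H(5) R(1) by simp
  have b1: "\<alpha> \<le> \<alpha>'" "\<beta>' \<le> \<beta>" using H R by linarith+
  show ?case using b1 R(3) fin sub cov by blast
qed

lemma lemC:
  fixes \<alpha> \<beta> \<delta> :: real
  assumes "0<\<alpha>" "\<alpha><\<beta>" "\<delta>>0" "\<forall>R. \<exists>r\<in>S. \<bar>r\<bar> > R"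
  shows "\<exists>\<alpha>' \<beta>'. \<alpha> \<le> \<alpha>' \<and> \<alpha>' < \<beta>' \<and> \<beta>' \<le> \<beta> \<and> {\<alpha>'..\<beta>'} \<subseteq> Gs S \<delta>"
proof -
  define K where "K = nat (ceiling (2*\<beta>/\<delta>)) + 1"
  have "real K > 2*\<beta>/\<delta>" unfolding K_def by linarith
  hence Kb: "real K * \<delta>/2 > \<beta>" using assms by (simp add: field_simps)
  obtain \<alpha>' \<beta>' F where H: "\<alpha> \<le> \<alpha>'" "\<alpha>' < \<beta>'" "\<beta>' \<le> \<beta>" "finite F" "F \<subseteq> S"
     "\<forall>i<K. \<forall>t. \<alpha>' \<le> t \<and> t \<le> \<beta>' \<longrightarrow> (\<exists>r\<in>F. \<exists>k::int. \<bar>r - of_int k * t - real i * \<delta>/2\<bar> < \<delta>/2)"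
    using lemB[OF assms, of K] by blast
  have "t \<in> Gs S \<delta>" if t: "\<alpha>' \<le> t" "t \<le> \<beta>'" for t
    unfolding Gs_def
  proof (intro CollectI exI[of _ F] conjI allI)
    fix u
    have tpos: "t > 0" using t H assms by linarith
    define v where "v = u - of_int (floor (u/t)) * t"
    have "of_int (floor (u/t)) * t \<le> u" by (rule floor_divide_lower[OF tpos])
    then have v0: "v \<ge> 0" unfolding v_def by simp
    have "u < (of_int (floor (u/t)) + 1) * t" by (rule floor_divide_upper[OF tpos])
    then have v1: "v < t" unfolding v_def by (simp add: algebra_simps)
    have hpos: "\<delta>/2 > 0" using assms by simp
    define fl where "fl = floor (v/(\<delta>/2))"
    have fl0: "fl \<ge> 0" unfolding fl_def using v0 hpos by simp
    define i where "i = nat fl"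
    have ri: "real i = of_int fl" unfolding i_def using fl0 by simp
    have i1: "real i * (\<delta>/2) \<le> v" unfolding ri fl_def by (rule floor_divide_lower[OF hpos])
    have i2: "v < (real i + 1) * (\<delta>/2)" unfolding ri fl_def by (rule floor_divide_upper[OF hpos])
    have "real i * (\<delta>/2) < real K * (\<delta>/2)" using i1 v1 t H Kb by linarith
    hence iK: "i < K" using assms by simp
    obtain r k where rk: "r \<in> F" "\<bar>r - of_int k * t - real i * \<delta>/2\<bar> < \<delta>/2"
      using H(6) iK t by blast
    have "\<bar>u + of_int (k - floor (u/t)) * t - r\<bar> = \<bar>(v - real i * \<delta>/2) - (r - of_int k * t - real i * \<delta>/2)\<bar>"
      unfolding v_def by (simp add: algebra_simps)
    also have "\<dots> \<le> \<bar>v - real i * \<delta>/2\<bar> + \<bar>r - of_int k * t - real i * \<delta>/2\<bar>" by (rule abs_triangle_ineq4)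
    also have "\<dots> < \<delta>"
    proof -
      have a1: "0 \<le> v - real i * \<delta>/2" using i1 by simp
      have a2: "v - real i * \<delta>/2 < \<delta>/2" using i2 by (simp add: algebra_simps)
      have "\<bar>v - real i * \<delta>/2\<bar> < \<delta>/2" using a1 a2 by simp
      then show ?thesis using rk(2) by linarith
    qed
    finally show "\<exists>r\<in>F. \<exists>m::int. \<bar>u + of_int m * t - r\<bar> < \<delta>" using rk(1) by blast
  qed (use H in auto)
  then show ?thesis using H by (intro exI[of _ \<alpha>'] exI[of _ \<beta>']) auto
qed



lemma Gs_neg: assumes "t \<in> Gs S \<delta>" shows "-t \<in> Gs S \<delta>"
proof -
  obtain F where F: "finite F" "F \<subseteq> S" "\<forall>u. \<exists>r\<in>F. \<exists>m::int. \<bar>u + of_int m * t - r\<bar> < \<delta>"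
    using assms unfolding Gs_def by blast
  have "\<forall>u. \<exists>r\<in>F. \<exists>m::int. \<bar>u + of_int m * (-t) - r\<bar> < \<delta>"
  proof
    fix u obtain r m where rm: "r\<in>F" "\<bar>u + of_int m * t - r\<bar> < \<delta>" using F(3) by blast
    then have "\<bar>u + of_int (-m) * (-t) - r\<bar> < \<delta>" by simp
    then show "\<exists>r\<in>F. \<exists>m::int. \<bar>u + of_int m * (-t) - r\<bar> < \<delta>" using rm(1) by blast
  qed
  then show ?thesis using F(1,2) unfolding Gs_def by blast
qed

lemma Gs_interval:
  fixes a b \<delta> :: real
  assumes "a<b" "\<delta>>0" "\<forall>R. \<exists>r\<in>S. \<bar>r\<bar> > R"
  shows "\<exists>a' b'. a \<le> a' \<and> a' < b' \<and> b' \<le> b \<and> {a'..b'} \<subseteq> Gs S \<delta>"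
proof (cases "b > 0")
  case True
  have h: "0 < max a (b/2)" "max a (b/2) < b" using True assms by auto
  obtain a' b' where H: "max a (b/2) \<le> a'" "a' < b'" "b' \<le> b" "{a'..b'} \<subseteq> Gs S \<delta>"
    using lemC[OF h assms(2,3)] by blast
  have "a \<le> a'" using H(1) by simp
  then show ?thesis using H(2,3,4) by blast
next
  case False
  have h: "0 < -(a+b)/2" "-(a+b)/2 < -a" using False assms by auto
  obtain a' b' where H: "-(a+b)/2 \<le> a'" "a' < b'" "b' \<le> -a" "{a'..b'} \<subseteq> Gs S \<delta>"
    using lemC[OF h assms(2,3)] by blast
  have sub: "{-b'..-a'} \<subseteq> Gs S \<delta>"
  proof
    fix t assume "t \<in> {-b'..-a'}"
    then have "-t \<in> {a'..b'}" by simp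
    then have "-t \<in> Gs S \<delta>" using H(4) by (rule rev_subsetD)
    then have "-(-t) \<in> Gs S \<delta>" by (rule Gs_neg)
    then show "t \<in> Gs S \<delta>" by simp
  qed
  have "a \<le> -b'" using H(3) by linarith
  moreover have "-b' < -a'" using H(2) by linarith
  moreover have "-a' \<le> b" using H(1) False assms(1) by (simp add: field_simps)
  ultimately show ?thesis using sub by blast
qed

lemma Gs_nowhere_dense:
  fixes \<delta> :: real
  assumes "\<delta>>0" "\<forall>R. \<exists>r\<in>S. \<bar>r\<bar> > R"
  shows "nowhere_dense (- Gs S \<delta>)"
  unfolding nowhere_dense_def
proof (rule ccontr)
  assume "interior (closure (- Gs S \<delta>)) \<noteq> {}"
  then obtain y where "y \<in> interior (closure (- Gs S \<delta>))" by blast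
  then obtain e where e: "e>0" "ball y e \<subseteq> closure (- Gs S \<delta>)"
    using mem_interior by blast
  have "y - e < y + e" using e(1) by simp
  then obtain a' b' where H: "y-e \<le> a'" "a' < b'" "b' \<le> y+e" "{a'..b'} \<subseteq> Gs S \<delta>"
    using Gs_interval[OF _ assms] by blast
  define z where "z = (a'+b')/2"
  have z1: "y - e < z" using H(1,2) unfolding z_def by (simp add: field_simps)
  have z2: "z < y + e" using H(2,3) unfolding z_def by (simp add: field_simps)
  have "\<bar>y - z\<bar> < e" using z1 z2 by (simp add: abs_less_iff)
  then have "z \<in> ball y e" unfolding mem_ball dist_real_def .
  then have "z \<in> closure (- Gs S \<delta>)" by (rule subsetD[OF e(2)])
  moreover have "(b'-a')/2 > 0" using H(2) by simp
  ultimately obtain w where w: "w \<in> - Gs S \<delta>" "dist w z < (b'-a')/2"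
    unfolding closure_approachable by blast
  have "\<bar>w - z\<bar> < (b'-a')/2" using w(2) unfolding dist_real_def .
  then have h1: "w - z < (b'-a')/2" and h2: "-(w - z) < (b'-a')/2" by (simp_all only: abs_less_iff)
  have "a' \<le> w" using h2 unfolding z_def by (simp add: field_simps)
  moreover have "w \<le> b'" using h1 unfolding z_def by (simp add: field_simps)
  ultimately have "w \<in> {a'..b'}" by simp
  then have "w \<in> Gs S \<delta>" using H(4) by (rule rev_subsetD)
  then show False using w(1) by simp
qed

lemma meagre_countable_union:
  fixes \<F> :: "'a::topological_space set set"
  assumes "countable \<F>" "\<And>S. S \<in> \<F> \<Longrightarrow> nowhere_dense S"
  shows "meagre (\<Union>\<F>)"
proof (cases "\<F> = {}")
  case True
  show ?thesis unfolding meagre_def True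
    by (intro exI[of _ "\<lambda>_. {}"]) (simp add: nowhere_dense_def)
next
  case False
  have "\<forall>i. nowhere_dense (from_nat_into \<F> i)"
    using assms(2) from_nat_into[OF False] by blast
  moreover have "\<Union>\<F> \<subseteq> (\<Union>i. from_nat_into \<F> i)"
  proof
    fix x assume "x \<in> \<Union>\<F>"
    then obtain S where S: "S \<in> \<F>" "x \<in> S" by blast
    then have "from_nat_into \<F> (to_nat_on \<F> S) = S" using from_nat_into_to_nat_on[OF assms(1)] by blast
    then show "x \<in> (\<Union>i. from_nat_into \<F> i)" using S(2) by (metis UN_I UNIV_I)
  qed
  ultimately show ?thesis unfolding meagre_def by blast
qed

lemma flow_cont:
  assumes "is_flow \<Phi>" shows "continuous_on UNIV (\<Phi> r)"
proof -
  have H: "continuous_on UNIV (\<lambda>p. \<Phi> (fst p) (snd p))" using assms unfolding is_flow_def by blast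
  have "continuous_on UNIV (\<lambda>z. (\<lambda>p. \<Phi> (fst p) (snd p)) (r, z))"
    by (rule continuous_on_compose2[OF H]) (auto intro: continuous_intros)
  then show ?thesis by simp
qed

lemma flow_cont_time:
  assumes "is_flow \<Phi>" shows "continuous_on UNIV (\<lambda>s. \<Phi> s c)"
proof -
  have H: "continuous_on UNIV (\<lambda>p. \<Phi> (fst p) (snd p))" using assms unfolding is_flow_def by blast
  have "continuous_on UNIV (\<lambda>s. (\<lambda>p. \<Phi> (fst p) (snd p)) (s, c))"
    by (rule continuous_on_compose2[OF H]) (auto intro: continuous_intros)
  then show ?thesis by simp
qed

lemma flow_0: "is_flow \<Phi> \<Longrightarrow> \<Phi> 0 x = x" unfolding is_flow_def by blast
lemma flow_add: "is_flow \<Phi> \<Longrightarrow> \<Phi> (s + t) x = \<Phi> s (\<Phi> t x)" unfolding is_flow_def by blast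

lemma flow_inv1: assumes "is_flow \<Phi>" shows "\<Phi> s (\<Phi> (-s) x) = x"
  using flow_add[OF assms, of s "-s" x] flow_0[OF assms, of x] by simp
lemma flow_inv2: assumes "is_flow \<Phi>" shows "\<Phi> (-s) (\<Phi> s x) = x"
  using flow_add[OF assms, of "-s" s x] flow_0[OF assms, of x] by simp

lemma flow_inv_eq: assumes "is_flow \<Phi>" shows "inv_into UNIV (\<Phi> t) = \<Phi> (-t)"
proof
  fix x
  have "inj (\<Phi> t)" by (rule inj_on_inverseI[of _ "\<Phi> (-t)"]) (simp add: flow_inv2[OF assms])
  then have "inv_into UNIV (\<Phi> t) (\<Phi> t (\<Phi> (-t) x)) = \<Phi> (-t) x" by (rule inv_f_f)
  then show "inv_into UNIV (\<Phi> t) x = \<Phi> (-t) x" using flow_inv1[OF assms] by simp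
qed

lemma flow_pow: assumes "is_flow \<Phi>" shows "(\<Phi> t ^^ n) x = \<Phi> (real n * t) x"
proof (induction n)
  case 0 then show ?case using flow_0[OF assms] by simp
next
  case (Suc n)
  have "(\<Phi> t ^^ Suc n) x = \<Phi> t (\<Phi> (real n * t) x)" using Suc by simp
  also have "\<dots> = \<Phi> (t + real n * t) x" using flow_add[OF assms, of t "real n * t" x] by simp
  finally show ?case by (simp add: algebra_simps)
qed

lemma flow_zpow: assumes "is_flow \<Phi>" shows "zpow (\<Phi> t) m x = \<Phi> (of_int m * t) x"
proof (cases "0 \<le> m")
  case True then show ?thesis unfolding zpow_def using flow_pow[OF assms] by simp
next
  case False
  then have "zpow (\<Phi> t) m x = (\<Phi> (-t) ^^ nat (-m)) x" unfolding zpow_def using flow_inv_eq[OF assms] by simp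
  also have "\<dots> = \<Phi> (real (nat (-m)) * (-t)) x" by (rule flow_pow[OF assms])
  finally show ?thesis using False by simp
qed

lemma ret_unbounded:
  fixes A :: "('a::metric_space set \<times> ('a \<Rightarrow> real^'n)) set" and \<Phi> :: "real \<Rightarrow> 'a \<Rightarrow> 'a"
  assumes "CARD('n) > 1" "Cr_atlas r A" "is_flow \<Phi>" "dense_set (flow_orbit \<Phi> c)" "e > 0"
  shows "\<exists>s. \<bar>s\<bar> > R \<and> dist (\<Phi> s c) c < e"
proof (rule ccontr)
  assume NR: "\<not> ?thesis"
  have fl: "is_flow \<Phi>" by fact
  show False
  proof (cases "\<exists>p. p \<noteq> 0 \<and> \<Phi> p c = c")
    case True
    then obtain p where p: "p \<noteq> 0" "\<Phi> p c = c" by blast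
    have pk0: "(\<Phi> p ^^ k) c = c" for k
      by (induction k) (simp_all add: p(2))
    have pk: "\<Phi> (real k * p) c = c" for k
      using flow_pow[OF fl, where t=p and n=k and x=c] pk0[of k] by simp
    obtain k :: nat where "real k > R / \<bar>p\<bar>" using reals_Archimedean2 by blast
    then have "real k * \<bar>p\<bar> > R" using p(1) by (simp add: field_simps)
    then have "\<bar>real k * p\<bar> > R" by (simp add: abs_mult)
    moreover have "dist (\<Phi> (real k * p) c) c < e" using pk[of k] assms(5) by simp
    ultimately show False using NR by blast
  next
    case False
    have injg: "inj (\<lambda>s. \<Phi> s c)"
    proof (rule injI)
      fix a b assume "\<Phi> a c = \<Phi> b c"
      note hyp = this
      have "\<Phi> (a-b) c = \<Phi> (a-b) (\<Phi> (-a) (\<Phi> a c))" by (simp add: flow_inv2[OF fl])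
      also have "\<dots> = \<Phi> (a-b) (\<Phi> (-a) (\<Phi> b c))" using hyp by simp
      also have "\<dots> = \<Phi> ((a-b) + (-a+b)) c" by (simp only: flow_add[OF fl])
      also have "\<dots> = c" by (simp add: flow_0[OF fl])
      finally have "\<Phi> (a - b) c = c" .
      moreover have "\<not> (a - b \<noteq> 0 \<and> \<Phi> (a - b) c = c)" using False by blast
      ultimately show "a = b" by simp
    qed
    define K where "K = (\<lambda>s. \<Phi> s c) ` {-R..R}"
    have contg: "continuous_on {-R..R} (\<lambda>s. \<Phi> s c)"
      using flow_cont_time[OF fl] continuous_on_subset by blast
    have "compact K" unfolding K_def by (rule compact_continuous_image[OF contg compact_Icc])
    then have clK: "closed K" by (rule compact_imp_closed)
    have ballK: "ball c e \<subseteq> K"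
    proof
      fix z assume z: "z \<in> ball c e"
      have "z \<in> closure K"
        unfolding closure_approachable
      proof (intro allI impI)
        fix \<epsilon> :: real assume "\<epsilon> > 0"
        define eta where "eta = min \<epsilon> (e - dist c z)"
        have "eta > 0" using \<open>\<epsilon>>0\<close> z unfolding eta_def by simp
        have "z \<in> closure (flow_orbit \<Phi> c)" using assms(4) unfolding dense_set_def by simp
        then obtain w where w: "w \<in> flow_orbit \<Phi> c" "dist w z < eta"
          using closure_approachable \<open>eta>0\<close> by blast
        then obtain s where s: "w = \<Phi> s c" unfolding flow_orbit_def by blast
        have zc: "dist c z < e" using z by simp
        have "dist w c \<le> dist w z + dist z c" by (rule dist_triangle)
        moreover have "eta \<le> e - dist c z" unfolding eta_def by simp
        ultimately have "dist w c < e" using w(2) zc by (simp add: dist_commute)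
        have "\<bar>s\<bar> \<le> R"
        proof (rule ccontr)
          assume "\<not> \<bar>s\<bar> \<le> R"
          then have "\<bar>s\<bar> > R" by simp
          then show False using NR \<open>dist w c < e\<close> s by blast
        qed
        then have "w \<in> K" unfolding K_def s by (intro image_eqI[where x=s]) (auto simp: abs_le_iff)
        moreover have "dist w z < \<epsilon>" using w(2) unfolding eta_def by simp
        ultimately show "\<exists>y\<in>K. dist y z < \<epsilon>" by blast
      qed
      then show "z \<in> K" using clK by (simp add: closure_closed)
    qed
    have injR: "inj_on (\<lambda>s. \<Phi> s c) {-R..R}" using inj_on_subset[OF injg subset_UNIV] .
    obtain g where hom: "homeomorphism {-R..R} K (\<lambda>s. \<Phi> s c) g"
      using homeomorphism_compact[OF compact_Icc contg K_def[symmetric] injR] by blast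
    then have gK: "continuous_on K g" "\<forall>y\<in>K. \<Phi> (g y) c = y"
      unfolding homeomorphism_def by auto
    have injgK: "inj_on g K"
    proof (rule inj_onI)
      fix y y' assume yy: "y \<in> K" "y' \<in> K" "g y = g y'"
      have e1: "\<Phi> (g y) c = y" using gK(2) yy(1) by blast
      have e2: "\<Phi> (g y') c = y'" using gK(2) yy(2) by blast
      have e3: "\<Phi> (g y) c = \<Phi> (g y') c" using yy(3) by (rule arg_cong[where f="\<lambda>z. \<Phi> z c"])
      have "y = \<Phi> (g y) c" using e1 by (rule sym)
      also have "\<dots> = \<Phi> (g y') c" by (rule e3)
      also have "\<dots> = y'" by (rule e2)
      finally show "y = y'" .
    qed
    have "c \<in> \<Union>(fst ` A)" using assms(2) unfolding Cr_atlas_def by simp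
    then obtain a where a: "a \<in> A" "c \<in> fst a" by blast
    obtain U ph where aeq: "a = (U, ph)" by (cases a)
    have U: "(U,ph) \<in> A" "c \<in> U" using a aeq by auto
    have "is_chart (U, ph)" using assms(2) U(1) unfolding Cr_atlas_def by blast
    then have ch: "open U" "open (ph ` U)" "inj_on ph U" "continuous_on (ph ` U) (inv_into U ph)"
      unfolding is_chart_def by auto
    define V where "V = ph ` (U \<inter> ball c e)"
    have Veq: "V = inv_into U ph -` ball c e \<inter> ph ` U"
    proof
      show "V \<subseteq> inv_into U ph -` ball c e \<inter> ph ` U"
      proof
        fix y assume "y \<in> V"
        then obtain u where u: "u \<in> U" "u \<in> ball c e" "y = ph u" unfolding V_def by blast
        have "inv_into U ph y = u" using u(3) inv_into_f_f[OF ch(3) u(1)] by simp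
        then have "inv_into U ph y \<in> ball c e" using u(2) by simp
        moreover have "y \<in> ph ` U" using u(1,3) by simp
        ultimately show "y \<in> inv_into U ph -` ball c e \<inter> ph ` U" by simp
      qed
      show "inv_into U ph -` ball c e \<inter> ph ` U \<subseteq> V"
      proof
        fix y assume y: "y \<in> inv_into U ph -` ball c e \<inter> ph ` U"
        then have yU: "y \<in> ph ` U" and yb: "inv_into U ph y \<in> ball c e" by simp_all
        have e1: "ph (inv_into U ph y) = y" by (rule f_inv_into_f[OF yU])
        have e2: "inv_into U ph y \<in> U" by (rule inv_into_into[OF yU])
        have "ph (inv_into U ph y) \<in> V" unfolding V_def using e2 yb by simp
        then show "y \<in> V" using e1 by simp
      qed
    qed
    have ov0: "\<forall>B. open B \<longrightarrow> open (inv_into U ph -` B \<inter> ph ` U)"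
      using continuous_on_open_vimage[OF ch(2), of "inv_into U ph"] ch(4) by simp
    have "open V" unfolding Veq using ov0 open_ball by blast
    have "ph c \<in> V" unfolding V_def using U(2) assms(5) by simp
    then have "V \<noteq> {}" by blast
    have invV: "inv_into U ph ` V \<subseteq> K"
    proof
      fix x assume "x \<in> inv_into U ph ` V"
      then obtain y where y: "y \<in> V" "x = inv_into U ph y" by blast
      then have "x \<in> ball c e" unfolding Veq by simp
      then show "x \<in> K" using ballK by (rule rev_subsetD)
    qed
    have c1: "continuous_on V (inv_into U ph)"
      by (rule continuous_on_subset[OF ch(4)]) (simp add: Veq)
    have cont: "continuous_on V (g \<circ> inv_into U ph)"
      by (rule continuous_on_compose[OF c1 continuous_on_subset[OF gK(1) invV]])
    have VU: "V \<subseteq> ph ` U" unfolding V_def by blast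
    have inj1: "inj_on (inv_into U ph) V"
      by (rule inj_on_subset[OF inj_on_inv_into VU]) simp
    have inj: "inj_on (g \<circ> inv_into U ph) V"
      by (rule comp_inj_on[OF inj1 inj_on_subset[OF injgK invV]])
    have "DIM(real^'n) \<le> DIM(real)"
      by (rule invariance_of_dimension[OF cont \<open>open V\<close> inj \<open>V \<noteq> {}\<close>])
    then show False using assms(1) by simp
  qed
qed



lemma hit:
  fixes \<Phi> :: "real \<Rightarrow> 'a::metric_space \<Rightarrow> 'a"
  assumes fl: "is_flow \<Phi>" and Cpos: "C > 0"
    and lip: "\<And>a b z. dist (\<Phi> a z) (\<Phi> b z) \<le> C * \<bar>a - b\<bar>"
    and dx: "dense_set (flow_orbit \<Phi> x)" and rho: "\<rho> > 0"
    and tG: "t \<in> Gs {s. dist (\<Phi> s c) c < \<rho>/4} (\<rho>/(8*C))"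
  shows "\<exists>m::int. dist (\<Phi> (of_int m * t) x) c < \<rho>"
proof -
  obtain F where F: "finite F" "F \<subseteq> {s. dist (\<Phi> s c) c < \<rho>/4}"
    "\<forall>u. \<exists>r\<in>F. \<exists>m::int. \<bar>u + of_int m * t - r\<bar> < \<rho>/(8*C)"
    using tG unfolding Gs_def by blast
  have Fne: "F \<noteq> {}" using F(3) by blast
  have "\<forall>r\<in>F. \<exists>d>0. \<forall>z. dist z c < d \<longrightarrow> dist (\<Phi> r z) (\<Phi> r c) < \<rho>/4"
  proof
    fix r assume "r \<in> F"
    have "continuous_on UNIV (\<Phi> r)" by (rule flow_cont[OF fl])
    then have "\<forall>x\<in>UNIV. \<forall>e>0. \<exists>d>0. \<forall>x'\<in>UNIV. dist x' x < d \<longrightarrow> dist (\<Phi> r x') (\<Phi> r x) < e"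
      unfolding continuous_on_iff .
    moreover have "\<rho>/4 > 0" using rho by simp
    ultimately show "\<exists>d>0. \<forall>z. dist z c < d \<longrightarrow> dist (\<Phi> r z) (\<Phi> r c) < \<rho>/4"
      by blast
  qed
  from bchoice[OF this] obtain d where d: "\<forall>r\<in>F. d r > 0 \<and> (\<forall>z. dist z c < d r \<longrightarrow> dist (\<Phi> r z) (\<Phi> r c) < \<rho>/4)"
    by blast
  define eta where "eta = Min (d ` F)"
  have etapos: "eta > 0" unfolding eta_def using F(1) Fne d by (simp add: Min_gr_iff)
  have etale: "eta \<le> d r" if "r \<in> F" for r unfolding eta_def using F(1) that by simp
  have "c \<in> closure (flow_orbit \<Phi> x)" using dx unfolding dense_set_def by simp
  then obtain w where w: "w \<in> flow_orbit \<Phi> x" "dist w c < eta"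
    using closure_approachable etapos by blast
  then obtain r0 where r0: "w = \<Phi> r0 x" unfolding flow_orbit_def by blast
  obtain r m where rm: "r \<in> F" "\<bar>- r0 + of_int m * t - r\<bar> < \<rho>/(8*C)" using F(3) by blast
  define \<tau> where "\<tau> = of_int m * t - r0"
  have eq: "\<Phi> (of_int m * t) x = \<Phi> \<tau> w"
    unfolding r0 \<tau>_def using flow_add[OF fl, of "of_int m * t - r0" r0 x] by simp
  have "dist (\<Phi> \<tau> w) (\<Phi> r w) \<le> C * \<bar>\<tau> - r\<bar>" by (rule lip)
  also have "\<dots> \<le> C * (\<rho>/(8*C))" using rm(2) Cpos unfolding \<tau>_def by (intro mult_left_mono) auto
  also have "\<dots> = \<rho>/8" using Cpos by simp
  finally have d1: "dist (\<Phi> \<tau> w) (\<Phi> r w) \<le> \<rho>/8" .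
  have d2: "dist (\<Phi> r w) (\<Phi> r c) < \<rho>/4" using d rm(1) w(2) etale[OF rm(1)] by auto
  have d3: "dist (\<Phi> r c) c < \<rho>/4" using F(2) rm(1) by auto
  have "dist (\<Phi> \<tau> w) c < \<rho>"
    using d1 d2 d3 dist_triangle[of "\<Phi> \<tau> w" c "\<Phi> r w"] dist_triangle[of "\<Phi> r w" c "\<Phi> r c"] rho
    by linarith
  then show ?thesis using eq by (intro exI[of _ m]) simp
qed

lemma orb_mem:
  assumes fl: "is_flow \<Phi>" and y: "y \<in> flow_orbit \<Phi> x"
  shows "flow_orbit \<Phi> y = flow_orbit \<Phi> x"
proof -
  obtain s where s: "y = \<Phi> s x" using y unfolding flow_orbit_def by blast
  show ?thesis unfolding flow_orbit_def
  proof
    show "range (\<lambda>t. \<Phi> t y) \<subseteq> range (\<lambda>t. \<Phi> t x)"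
    proof
      fix z assume "z \<in> range (\<lambda>t. \<Phi> t y)"
      then obtain t where z: "z = \<Phi> t y" by blast
      have "z = \<Phi> (t + s) x" unfolding z s using flow_add[OF fl, of t s x] by simp
      then show "z \<in> range (\<lambda>t. \<Phi> t x)" by blast
    qed
    show "range (\<lambda>t. \<Phi> t x) \<subseteq> range (\<lambda>t. \<Phi> t y)"
    proof
      fix z assume "z \<in> range (\<lambda>t. \<Phi> t x)"
      then obtain t where z: "z = \<Phi> t x" by blast
      have "z = \<Phi> (t - s) y" unfolding z s using flow_add[OF fl, of "t-s" s x] by simp
      then show "z \<in> range (\<lambda>t. \<Phi> t y)" by blast
    qed
  qed
qed

lemma self_orb: "is_flow \<Phi> \<Longrightarrow> x \<in> flow_orbit \<Phi> x"
  unfolding flow_orbit_def by (rule range_eqI[where x=0]) (simp add: flow_0)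

lemma zself: "x \<in> z_orbit f x"
proof -
  have "zpow f 0 x = x" unfolding zpow_def by simp
  then show ?thesis unfolding z_orbit_def by (intro range_eqI[where x=0]) simp
qed

lemma zsub: "is_flow \<Phi> \<Longrightarrow> z_orbit (\<Phi> t) x \<subseteq> flow_orbit \<Phi> x"
  unfolding z_orbit_def flow_orbit_def using flow_zpow by fastforce

lemma dense_mono: "dense_set A \<Longrightarrow> A \<subseteq> B \<Longrightarrow> dense_set B"
  unfolding dense_set_def using closure_mono[of A B] by auto

theorem corollary2p4:
  fixes A :: "('a::{metric_space, second_countable_topology} set \<times> ('a \<Rightarrow> real^'n)) set"
    and \<Phi> :: "real \<Rightarrow> 'a \<Rightarrow> 'a"
    and r :: nat
  assumes "CARD('n) > 1"
    and "r > 0"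
    and "Cr_atlas r A"
    and "Cr_flow r A \<Phi>"
    and "flow_quasi_minimal \<Phi>"
    and "bounded_generator \<Phi>"
  shows "\<exists>E :: real set. meagre E \<and>
           (\<forall>t. t \<notin> E \<longrightarrow>
              homeo_quasi_minimal (\<Phi> t) \<and>
              homeo_exceptional_set (\<Phi> t) = flow_exceptional_set \<Phi>)"

proof -
  have fl: "is_flow \<Phi>" using assms(4) unfolding Cr_flow_def by blast
  obtain C0 where C0: "\<forall>t x. dist (\<Phi> t x) x \<le> C0 * \<bar>t\<bar>"
    using assms(6) unfolding bounded_generator_def by blast
  define C where "C = max C0 1"
  have Cpos: "C > 0" unfolding C_def by simp
  have lip: "dist (\<Phi> a z) (\<Phi> b z) \<le> C * \<bar>a - b\<bar>" for a b z
  proof -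
    have "\<Phi> a z = \<Phi> (a - b) (\<Phi> b z)" using flow_add[OF fl, of "a-b" b z] by simp
    moreover have "dist (\<Phi> (a - b) (\<Phi> b z)) (\<Phi> b z) \<le> C0 * \<bar>a - b\<bar>" using C0 by blast
    ultimately have "dist (\<Phi> a z) (\<Phi> b z) \<le> C0 * \<bar>a - b\<bar>" by simp
    also have "\<dots> \<le> C * \<bar>a-b\<bar>" unfolding C_def by (intro mult_right_mono) auto
    finally show ?thesis .
  qed
  define D where "D = {x. dense_set (flow_orbit \<Phi> x)}"
  have inD: "y \<in> D" if "y \<in> flow_orbit \<Phi> x" "x \<in> D" for x y
    using orb_mem[OF fl that(1)] that(2) unfolding D_def by simp
  have D_union: "\<Union>{flow_orbit \<Phi> x | x. dense_set (flow_orbit \<Phi> x)} = D"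
  proof
    show "\<Union>{flow_orbit \<Phi> x | x. dense_set (flow_orbit \<Phi> x)} \<subseteq> D"
      using inD unfolding D_def by blast
    show "D \<subseteq> \<Union>{flow_orbit \<Phi> x | x. dense_set (flow_orbit \<Phi> x)}"
      using self_orb[OF fl] unfolding D_def by blast
  qed
  have Dopen: "open D" using assms(5) D_union unfolding flow_quasi_minimal_def by simp
  obtain Q :: "'a set" where Q: "countable Q" "\<And>U. open U \<Longrightarrow> U \<noteq> {} \<Longrightarrow> \<exists>y\<in>Q. y \<in> U"
    using countable_dense_exists by blast
  define Gc where "Gc = (\<lambda>p. Gs {s. dist (\<Phi> s (fst p)) (fst p) < (1/real (Suc (snd p)))/4}
                                 ((1/real (Suc (snd p)))/(8*C)))"
  define E where "E = \<Union>((\<lambda>p. - Gc p) ` ((Q \<inter> D) \<times> (UNIV :: nat set)))"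
  have mE: "meagre E" unfolding E_def
  proof (rule meagre_countable_union)
    have "countable ((Q \<inter> D) \<times> (UNIV :: nat set))" using Q(1) by auto
    then show "countable ((\<lambda>p. - Gc p) ` ((Q \<inter> D) \<times> (UNIV :: nat set)))" by simp
  next
    fix S assume "S \<in> (\<lambda>p. - Gc p) ` ((Q \<inter> D) \<times> (UNIV :: nat set))"
    then obtain c k where ck: "c \<in> D" "S = - Gc (c, k)" by auto
    have pos: "(1/real (Suc k))/(8*C) > 0" "(1/real (Suc k))/4 > 0" using Cpos by auto
    have unb: "\<forall>R. \<exists>r\<in>{s. dist (\<Phi> s c) c < (1/real (Suc k))/4}. \<bar>r\<bar> > R"
    proof
      fix R
      obtain s where "\<bar>s\<bar> > R" "dist (\<Phi> s c) c < (1/real (Suc k))/4"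
        using ret_unbounded[OF assms(1) assms(3) fl _ pos(2), of c R] ck(1) unfolding D_def by blast
      then show "\<exists>r\<in>{s. dist (\<Phi> s c) c < (1/real (Suc k))/4}. \<bar>r\<bar> > R" by blast
    qed
    show "nowhere_dense S" unfolding ck(2) Gc_def
      using Gs_nowhere_dense[OF pos(1) unb] by simp
  qed
  have main: "dense_set (z_orbit (\<Phi> t) x)" if tE: "t \<notin> E" and xD: "x \<in> D" for t x
  proof (rule ccontr)
    assume nd: "\<not> dense_set (z_orbit (\<Phi> t) x)"
    define W where "W = - closure (z_orbit (\<Phi> t) x)"
    have Wo: "open W" unfolding W_def by auto
    have Wne: "W \<noteq> {}" using nd unfolding W_def dense_set_def by auto
    have "flow_orbit \<Phi> x \<subseteq> D" using inD xD by blast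
    then have "closure (flow_orbit \<Phi> x) \<subseteq> closure D" by (rule closure_mono)
    moreover have "closure (flow_orbit \<Phi> x) = UNIV" using xD unfolding D_def dense_set_def by simp
    ultimately have "closure D = UNIV" by blast
    then have "W \<inter> D \<noteq> {}" using Wo Wne open_Int_closure_eq_empty[OF Wo, of D] by auto
    then obtain c where c: "c \<in> Q" "c \<in> W" "c \<in> D" using Q(2)[of "W \<inter> D"] Wo Dopen by blast
    obtain e where e: "e > 0" "ball c e \<subseteq> W" using Wo c(2) open_contains_ball by blast
    obtain k where k: "inverse (real (Suc k)) < e" using reals_Archimedean e(1) by blast
    define \<rho> where "\<rho> = 1/real (Suc k)"
    have rho: "\<rho> > 0" "\<rho> < e" using k unfolding \<rho>_def by (auto simp: field_simps)
    have "t \<in> Gc (c,k)" using tE c unfolding E_def by blast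
    then have tG: "t \<in> Gs {s. dist (\<Phi> s c) c < \<rho>/4} (\<rho>/(8*C))" unfolding Gc_def \<rho>_def by simp
    have dx: "dense_set (flow_orbit \<Phi> x)" using xD unfolding D_def by simp
    obtain m :: int where m: "dist (\<Phi> (of_int m * t) x) c < \<rho>"
      using hit[OF fl Cpos lip dx rho(1) tG] by blast
    have "\<Phi> (of_int m * t) x \<in> z_orbit (\<Phi> t) x"
      unfolding z_orbit_def by (rule range_eqI[where x=m]) (simp add: flow_zpow[OF fl])
    then have "\<Phi> (of_int m * t) x \<notin> W" unfolding W_def using closure_subset by blast
    moreover have "\<Phi> (of_int m * t) x \<in> ball c e" using m rho(2) by (simp add: dist_commute)
    ultimately show False using e(2) by blast
  qed
  show ?thesis
  proof (intro exI[of _ E] conjI allI impI)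
    show "meagre E" by (rule mE)
    fix t assume tE: "t \<notin> E"
    have equiv: "dense_set (z_orbit (\<Phi> t) y) \<longleftrightarrow> y \<in> D" for y
      using main[OF tE, of y] dense_mono[OF _ zsub[OF fl]] unfolding D_def by blast
    have U1: "\<Union>{z_orbit (\<Phi> t) x | x. dense_set (z_orbit (\<Phi> t) x)} = D"
    proof
      show "\<Union>{z_orbit (\<Phi> t) x | x. dense_set (z_orbit (\<Phi> t) x)} \<subseteq> D"
      proof
        fix y assume "y \<in> \<Union>{z_orbit (\<Phi> t) x | x. dense_set (z_orbit (\<Phi> t) x)}"
        then obtain x where x: "y \<in> z_orbit (\<Phi> t) x" "dense_set (z_orbit (\<Phi> t) x)" by blast
        have "x \<in> D" using x(2) equiv by blast
        moreover have "y \<in> flow_orbit \<Phi> x" using x(1) zsub[OF fl] by blast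
        ultimately show "y \<in> D" using inD by blast
      qed
      show "D \<subseteq> \<Union>{z_orbit (\<Phi> t) x | x. dense_set (z_orbit (\<Phi> t) x)}"
      proof
        fix y assume "y \<in> D"
        then have "dense_set (z_orbit (\<Phi> t) y)" using equiv by blast
        then show "y \<in> \<Union>{z_orbit (\<Phi> t) x | x. dense_set (z_orbit (\<Phi> t) x)}"
          using zself[of y "\<Phi> t"] by blast
      qed
    qed
    show "homeo_quasi_minimal (\<Phi> t)" unfolding homeo_quasi_minimal_def U1 by (rule Dopen)
    show "homeo_exceptional_set (\<Phi> t) = flow_exceptional_set \<Phi>"
      unfolding homeo_exceptional_set_def flow_exceptional_set_def
    proof
      show "\<Union>{z_orbit (\<Phi> t) x | x. \<not> dense_set (z_orbit (\<Phi> t) x)}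
            \<subseteq> \<Union>{flow_orbit \<Phi> x | x. \<not> dense_set (flow_orbit \<Phi> x)}"
      proof
        fix y assume "y \<in> \<Union>{z_orbit (\<Phi> t) x | x. \<not> dense_set (z_orbit (\<Phi> t) x)}"
        then obtain x where x: "y \<in> z_orbit (\<Phi> t) x" "\<not> dense_set (z_orbit (\<Phi> t) x)" by blast
        have "\<not> dense_set (flow_orbit \<Phi> x)" using x(2) equiv unfolding D_def by blast
        moreover have "y \<in> flow_orbit \<Phi> x" using x(1) zsub[OF fl] by blast
        ultimately show "y \<in> \<Union>{flow_orbit \<Phi> x | x. \<not> dense_set (flow_orbit \<Phi> x)}" by blast
      qed
      show "\<Union>{flow_orbit \<Phi> x | x. \<not> dense_set (flow_orbit \<Phi> x)}
            \<subseteq> \<Union>{z_orbit (\<Phi> t) x | x. \<not> dense_set (z_orbit (\<Phi> t) x)}"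
      proof
        fix y assume "y \<in> \<Union>{flow_orbit \<Phi> x | x. \<not> dense_set (flow_orbit \<Phi> x)}"
        then obtain x where x: "y \<in> flow_orbit \<Phi> x" "\<not> dense_set (flow_orbit \<Phi> x)" by blast
        then have "y \<notin> D" using orb_mem[OF fl x(1)] unfolding D_def by simp
        then have "\<not> dense_set (z_orbit (\<Phi> t) y)" using equiv by blast
        then show "y \<in> \<Union>{z_orbit (\<Phi> t) x | x. \<not> dense_set (z_orbit (\<Phi> t) x)}"
          using zself[of y "\<Phi> t"] by blast
      qed
    qed
  qed
qed

end
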